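(* Let $\delta_1,\delta_3$ be coprime positive integers, let $m\in\{1,\ldots,\max\{\delta_1,\delta_3\}\}$, and let $(x_{m1},x_{m3})$ be a B\'ezout couple of $m$ such that $(x_{m1},x_{m3})=(a_1,a_3)+(b_1,b_3)$ with integers $a_1,a_3,b_1,b_3$ satisfying $0<a_1\delta_1+a_3\delta_3<m$ and $0<b_1\delta_1+b_3\delta_3<m$. Then: (1) if $a_3\le-\delta_1$ then $a_1>\delta_3$; if moreover $\delta_3>\delta_1$, the converse also holds; (2) if $a_1\le-\delta_3$ then $a_3>\delta_1$; if moreover $\delta_1>\delta_3$, the converse also holds; (3) if $(x_{m1},x_{m3})$ is the $\lambda$-B\'ezout couple of $m$, then $a_3\le-\delta_1$ implies $\delta_1<b_3$, and $\delta_1<b_3$ implies $a_3<0$; (4) if $(x_{m1},x_{m3})$ is the $\lambda$-B\'ezout couple of $m$, then $a_1>\delta_3$ implies $b_1<-\delta_3$, and $b_1\le-\delta_3$ implies $0<a_1$; (5) if $(x_{m1},x_{m3})$ is the $\mu$-B\'ezout couple of $m$, then $a_1\le-\delta_3$ implies $\delta_3<b_1$, and $\delta_3<b_1$ implies $a_1<0$; (6) if $(x_{m1},x_{m3})$ is the $\mu$-B\'ezout couple of $m$, then $a_3>\delta_1$ implies $b_3<-\delta_1$, and $b_3\le-\delta_1$ implies $0<a_3$. All statements also hold with the roles of $(a_1,a_3)$ and $(b_1,b_3)$ interchanged.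
   Context: For $i\in\{1,\ldots,\max\{\delta_1,\delta_3\}\}$, the $\lambda$-B\'ezout couple of $i$ is the unique $(x,y)\in\mathbb Z^2$ with $x\delta_1+y\delta_3=i$ and $0<y\le\delta_1$; the $\mu$-B\'ezout couple of $i$ is the unique $(x,y)\in\mathbb Z^2$ with $x\delta_1+y\delta_3=i$ and $0<x\le\delta_3$. A B\'ezout couple of $i$ is either of these. *)

theory Defs
  imports Main
begin

definition lambda_bezout :: "int \<Rightarrow> int \<Rightarrow> int \<Rightarrow> int \<times> int \<Rightarrow> bool" where
  "lambda_bezout d1 d3 i c \<longleftrightarrow> fst c * d1 + snd c * d3 = i \<and> 0 < snd c \<and> snd c \<le> d1"

definition mu_bezout :: "int \<Rightarrow> int \<Rightarrow> int \<Rightarrow> int \<times> int \<Rightarrow> bool" where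
  "mu_bezout d1 d3 i c \<longleftrightarrow> fst c * d1 + snd c * d3 = i \<and> 0 < fst c \<and> fst c \<le> d3"

definition bezout_couple :: "int \<Rightarrow> int \<Rightarrow> int \<Rightarrow> int \<times> int \<Rightarrow> bool" where
  "bezout_couple d1 d3 i c \<longleftrightarrow> lambda_bezout d1 d3 i c \<or> mu_bezout d1 d3 i c"

end

theory Submission
  imports Defs
begin

lemma h1:
  fixes d1 d3 m a1 a3 :: int
  assumes "0 < d1" "0 < d3" "0 < a1 * d1 + a3 * d3" "a1 * d1 + a3 * d3 < m" "m \<le> max d1 d3"
  shows "(a3 \<le> - d1 \<longrightarrow> a1 > d3) \<and> (d3 > d1 \<longrightarrow> a1 > d3 \<longrightarrow> a3 \<le> - d1)"
proof (intro conjI impI)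
  assume a: "a3 \<le> - d1"
  show "a1 > d3"
  proof (rule ccontr)
    assume "\<not> a1 > d3"
    then have "a1 * d1 \<le> d3 * d1" using assms(1) by (intro mult_right_mono) auto
    moreover have "a3 * d3 \<le> (-d1) * d3" using a assms(2) by (intro mult_right_mono) auto
    ultimately show False using assms(3) by (simp add: algebra_simps)
  qed
next
  assume b: "d3 > d1" "a1 > d3"
  show "a3 \<le> - d1"
  proof (rule ccontr)
    assume "\<not> a3 \<le> - d1"
    then have "(1 - d1) * d3 \<le> a3 * d3" using assms(2) by (intro mult_right_mono) auto
    moreover have "(d3 + 1) * d1 \<le> a1 * d1" using b assms(1) by (intro mult_right_mono) auto
    moreover have "(1-d1)*d3 = d3 - d1*d3" "(d3+1)*d1 = d1*d3 + d1" by (simp_all add: algebra_simps)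
    moreover have "m \<le> d3" using assms(5) b by simp
    ultimately show False using assms(1,4) by linarith
  qed
qed

lemma hl:
  fixes d1 d3 m x1 x3 :: int
  assumes "0 < d1" "0 < d3" "1 \<le> m" "m \<le> max d1 d3" "x1 * d1 + x3 * d3 = m" "0 < x3" "x3 \<le> d1"
  shows "x1 \<le> 0 \<and> x1 \<ge> 1 - d3"
proof
  show "x1 \<le> 0"
  proof (rule ccontr)
    assume "\<not> x1 \<le> 0"
    then have "1 * d1 \<le> x1 * d1" using assms(1) by (intro mult_right_mono) auto
    moreover have "1 * d3 \<le> x3 * d3" using assms by (intro mult_right_mono) auto
    ultimately show False using assms unfolding max_def by (simp only: mult_1 split: if_splits; linarith)
  qed
  show "x1 \<ge> 1 - d3"
  proof (rule ccontr)
    assume "\<not> x1 \<ge> 1 - d3"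
    then have "x1 * d1 \<le> (-d3) * d1" using assms(1) by (intro mult_right_mono) auto
    moreover have "x3 * d3 \<le> d1 * d3" using assms by (intro mult_right_mono) auto
    moreover have "(-d3)*d1 = -(d1*d3)" by simp
    ultimately show False using assms by (simp only: mult.commute[of d3 d1]; linarith)
  qed
qed

theorem lemma2p16:
  fixes d1 d3 m x1 x3 a1 a3 b1 b3 :: int
  assumes "0 < d1" and "0 < d3" and "coprime d1 d3"
    and "1 \<le> m" and "m \<le> max d1 d3"
    and "bezout_couple d1 d3 m (x1, x3)"
    and "x1 = a1 + b1" and "x3 = a3 + b3"
    and "0 < a1 * d1 + a3 * d3" and "a1 * d1 + a3 * d3 < m"
    and "0 < b1 * d1 + b3 * d3" and "b1 * d1 + b3 * d3 < m"
  shows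
    "(a3 \<le> - d1 \<longrightarrow> a1 > d3) \<and> (d3 > d1 \<longrightarrow> a1 > d3 \<longrightarrow> a3 \<le> - d1)
   \<and> (a1 \<le> - d3 \<longrightarrow> a3 > d1) \<and> (d1 > d3 \<longrightarrow> a3 > d1 \<longrightarrow> a1 \<le> - d3)
   \<and> (lambda_bezout d1 d3 m (x1, x3) \<longrightarrow>
        (a3 \<le> - d1 \<longrightarrow> d1 < b3) \<and> (d1 < b3 \<longrightarrow> a3 < 0))
   \<and> (lambda_bezout d1 d3 m (x1, x3) \<longrightarrow>
        (a1 > d3 \<longrightarrow> b1 < - d3) \<and> (b1 \<le> - d3 \<longrightarrow> 0 < a1))
   \<and> (mu_bezout d1 d3 m (x1, x3) \<longrightarrow>
        (a1 \<le> - d3 \<longrightarrow> d3 < b1) \<and> (d3 < b1 \<longrightarrow> a1 < 0))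
   \<and> (mu_bezout d1 d3 m (x1, x3) \<longrightarrow>
        (a3 > d1 \<longrightarrow> b3 < - d1) \<and> (b3 \<le> - d1 \<longrightarrow> 0 < a3))
   \<and> (b3 \<le> - d1 \<longrightarrow> b1 > d3) \<and> (d3 > d1 \<longrightarrow> b1 > d3 \<longrightarrow> b3 \<le> - d1)
   \<and> (b1 \<le> - d3 \<longrightarrow> b3 > d1) \<and> (d1 > d3 \<longrightarrow> b3 > d1 \<longrightarrow> b1 \<le> - d3)
   \<and> (lambda_bezout d1 d3 m (x1, x3) \<longrightarrow>
        (b3 \<le> - d1 \<longrightarrow> d1 < a3) \<and> (d1 < a3 \<longrightarrow> b3 < 0))
   \<and> (lambda_bezout d1 d3 m (x1, x3) \<longrightarrow>
        (b1 > d3 \<longrightarrow> a1 < - d3) \<and> (a1 \<le> - d3 \<longrightarrow> 0 < b1))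
   \<and> (mu_bezout d1 d3 m (x1, x3) \<longrightarrow>
        (b1 \<le> - d3 \<longrightarrow> d3 < a1) \<and> (d3 < a1 \<longrightarrow> b1 < 0))
   \<and> (mu_bezout d1 d3 m (x1, x3) \<longrightarrow>
        (b3 > d1 \<longrightarrow> a3 < - d1) \<and> (a3 \<le> - d1 \<longrightarrow> 0 < b3))"
  proof -
  note A = h1[OF assms(1,2,9,10,5)] h1[OF assms(1,2,11,12,5)]
  have m': "m \<le> max d3 d1" using assms(5) by (simp add: max.commute)
  have e1: "0 < a3 * d3 + a1 * d1" "a3 * d3 + a1 * d1 < m" "0 < b3 * d3 + b1 * d1" "b3 * d3 + b1 * d1 < m"
    using assms(9-12) by linarith+
  note B = h1[OF assms(2,1) e1(1,2) m'] h1[OF assms(2,1) e1(3,4) m']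
  have L: "lambda_bezout d1 d3 m (x1, x3) \<Longrightarrow> x1 \<le> 0 \<and> x1 \<ge> 1 - d3"
    using hl[OF assms(1,2,4,5), of x1 x3] by (simp add: lambda_bezout_def)
  have M: "mu_bezout d1 d3 m (x1, x3) \<Longrightarrow> x3 \<le> 0 \<and> x3 \<ge> 1 - d1"
    using hl[OF assms(2,1,4) m', of x3 x1] by (simp add: mu_bezout_def algebra_simps)
  have A': "(a3 \<le> - d1 \<longrightarrow> a1 > d3) \<and> (d3 > d1 \<longrightarrow> a1 > d3 \<longrightarrow> a3 \<le> - d1)"
    "(b3 \<le> - d1 \<longrightarrow> b1 > d3) \<and> (d3 > d1 \<longrightarrow> b1 > d3 \<longrightarrow> b3 \<le> - d1)"
    "(a1 \<le> - d3 \<longrightarrow> a3 > d1) \<and> (d1 > d3 \<longrightarrow> a3 > d1 \<longrightarrow> a1 \<le> - d3)"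
    "(b1 \<le> - d3 \<longrightarrow> b3 > d1) \<and> (d1 > d3 \<longrightarrow> b3 > d1 \<longrightarrow> b1 \<le> - d3)"
    using A B by simp_all
  have LL: "(a3 \<le> - d1 \<longrightarrow> d1 < b3) \<and> (d1 < b3 \<longrightarrow> a3 < 0) \<and> (a1 > d3 \<longrightarrow> b1 < - d3) \<and> (b1 \<le> - d3 \<longrightarrow> 0 < a1)
     \<and> (b3 \<le> - d1 \<longrightarrow> d1 < a3) \<and> (d1 < a3 \<longrightarrow> b3 < 0) \<and> (b1 > d3 \<longrightarrow> a1 < - d3) \<and> (a1 \<le> - d3 \<longrightarrow> 0 < b1)"
    if h: "lambda_bezout d1 d3 m (x1, x3)"
  proof -
    have "0 < x3" "x3 \<le> d1" "x1 \<le> 0" "x1 \<ge> 1 - d3" using L[OF h] h by (simp_all add: lambda_bezout_def)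
    then show ?thesis using assms(7,8) by (intro conjI impI; linarith)
  qed
  have MM: "(a1 \<le> - d3 \<longrightarrow> d3 < b1) \<and> (d3 < b1 \<longrightarrow> a1 < 0) \<and> (a3 > d1 \<longrightarrow> b3 < - d1) \<and> (b3 \<le> - d1 \<longrightarrow> 0 < a3)
     \<and> (b1 \<le> - d3 \<longrightarrow> d3 < a1) \<and> (d3 < a1 \<longrightarrow> b1 < 0) \<and> (b3 > d1 \<longrightarrow> a3 < - d1) \<and> (a3 \<le> - d1 \<longrightarrow> 0 < b3)"
    if h: "mu_bezout d1 d3 m (x1, x3)"
  proof -
    have "0 < x1" "x1 \<le> d3" "x3 \<le> 0" "x3 \<ge> 1 - d1" using M[OF h] h by (simp_all add: mu_bezout_def)
    then show ?thesis using assms(7,8) by (intro conjI impI; linarith)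
  qed
  have "lambda_bezout d1 d3 m (x1, x3) \<longrightarrow> (a3 \<le> - d1 \<longrightarrow> d1 < b3) \<and> (d1 < b3 \<longrightarrow> a3 < 0)"
       "lambda_bezout d1 d3 m (x1, x3) \<longrightarrow> (a1 > d3 \<longrightarrow> b1 < - d3) \<and> (b1 \<le> - d3 \<longrightarrow> 0 < a1)"
       "lambda_bezout d1 d3 m (x1, x3) \<longrightarrow> (b3 \<le> - d1 \<longrightarrow> d1 < a3) \<and> (d1 < a3 \<longrightarrow> b3 < 0)"
       "lambda_bezout d1 d3 m (x1, x3) \<longrightarrow> (b1 > d3 \<longrightarrow> a1 < - d3) \<and> (a1 \<le> - d3 \<longrightarrow> 0 < b1)"
    using LL by simp_all
  moreover have "mu_bezout d1 d3 m (x1, x3) \<longrightarrow> (a1 \<le> - d3 \<longrightarrow> d3 < b1) \<and> (d3 < b1 \<longrightarrow> a1 < 0)"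
       "mu_bezout d1 d3 m (x1, x3) \<longrightarrow> (a3 > d1 \<longrightarrow> b3 < - d1) \<and> (b3 \<le> - d1 \<longrightarrow> 0 < a3)"
       "mu_bezout d1 d3 m (x1, x3) \<longrightarrow> (b1 \<le> - d3 \<longrightarrow> d3 < a1) \<and> (d3 < a1 \<longrightarrow> b1 < 0)"
       "mu_bezout d1 d3 m (x1, x3) \<longrightarrow> (b3 > d1 \<longrightarrow> a3 < - d1) \<and> (a3 \<le> - d1 \<longrightarrow> 0 < b3)"
    using MM by simp_all
  ultimately show ?thesis using A' by (elim conjE) (intro conjI; assumption)
qed

end
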